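(* Let $\alpha\ge1$ be an integer and $0<\eta_1<\dots<\eta_\alpha<1$. Let $r_y$ be the rank function on $[-D,D]$ with thresholds $q_j=\eta_jD$ ($j=1,\dots,\alpha$), and let $r_z$ be the rank function on $[-2V,2V]$ with thresholds $q_j=\eta_j\xi V$ ($j=1,\dots,\alpha$) and $q_{\alpha+1}=\xi V$ (so $z$ has $\beta=\alpha+1$ thresholds). For $\mathbf{x}_1,\mathbf{x}_2\in S$ let $y=f(\mathbf{x}_1)-f(\mathbf{x}_2)$, $z=\theta(\mathbf{x}_1)-\theta(\mathbf{x}_2)$, $\varphi=r_y(y)+r_z(z)$, and $e=\xi V/D$. Then for all $\mathbf{x}_1,\mathbf{x}_2\in S$: (i) if $\varphi<0$ then $\pi(\mathbf{x}_1)>\pi(\mathbf{x}_2)$; (ii) if $\varphi>0$ then $\pi(\mathbf{x}_1)<\pi(\mathbf{x}_2)$; (iii) if $\varphi=0$ and $z=-ey$ then $\pi(\mathbf{x}_1)=\pi(\mathbf{x}_2)$; (iv) if $\varphi=0$ and $z<-ey$ then $\pi(\mathbf{x}_1)>\pi(\mathbf{x}_2)$; (v) if $\varphi=0$ and $z>-ey$ then $\pi(\mathbf{x}_1)<\pi(\mathbf{x}_2)$.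
   Context: Let $S\subset\mathbb{R}^k$ be a compact box, $f,g_1,\dots,g_m,h_{m+1},\dots,h_n:S\to\mathbb{R}$ continuous, $\delta>0$. Put $v_i(\mathbf{x})=\max\{g_i(\mathbf{x}),0\}$ ($i\le m$), $v_i(\mathbf{x})=\max\{|h_i(\mathbf{x})|-\delta,0\}$ ($m<i\le n$), $\vartheta(\mathbf{x})=\sum_{i=1}^n v_i(\mathbf{x})$; $\mathbf{x}$ is feasible iff $\vartheta(\mathbf{x})=0$. Let $D=\max_S f-\min_S f$ and $V=\max_S\vartheta$, and assume $D>0$, $V>0$. Define $\theta(\mathbf{x})=-V$ if $\vartheta(\mathbf{x})=0$ and $\theta(\mathbf{x})=\vartheta(\mathbf{x})$ otherwise. Let $\rho(\mathbf{x})=\#\{i: v_i(\mathbf{x})>0\}$ and $\mathbb{I}(\rho(\mathbf{x})>0)$ be $1$ if $\rho(\mathbf{x})>0$ and $0$ otherwise. Fix $0<\xi\le 1$ and define $\sigma(\mathbf{x})=\mathbb{I}(\rho(\mathbf{x})>0)\,D+\frac{D}{\xi V}\theta(\mathbf{x})$, $\pi(\mathbf{x})=-(f(\mathbf{x})+\sigma(\mathbf{x}))$. Rank function: given $b>0$ and thresholds $0<q_1<\dots<q_a<b$, set $q_0=0$, $q_{a+1}=b$ and define $r:[-b,b]\to\mathbb{Z}$ by $r(0)=0$; $r(\Delta)=j$ if $q_{j-1}<\Delta\le q_j$ ($1\le j\le a+1$); $r(\Delta)=-j$ if $-q_j\le\Delta<-q_{j-1}$ ($1\le j\le a+1$). 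*)

theory Defs
  imports "HOL-Analysis.Analysis"
begin

text \<open>Constraint violations: indices 1..m are inequality constraints g i \<le> 0,
  indices m+1..n are equality constraints |h i| \<le> delta.\<close>
definition viol :: "nat \<Rightarrow> (nat \<Rightarrow> 'a \<Rightarrow> real) \<Rightarrow> (nat \<Rightarrow> 'a \<Rightarrow> real) \<Rightarrow> real \<Rightarrow> nat \<Rightarrow> 'a \<Rightarrow> real" where
  "viol m g h \<delta> i x = (if i \<le> m then max (g i x) 0 else max (\<bar>h i x\<bar> - \<delta>) 0)"

definition vtheta :: "nat \<Rightarrow> nat \<Rightarrow> (nat \<Rightarrow> 'a \<Rightarrow> real) \<Rightarrow> (nat \<Rightarrow> 'a \<Rightarrow> real) \<Rightarrow> real \<Rightarrow> 'a \<Rightarrow> real" where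
  "vtheta m n g h \<delta> x = (\<Sum>i\<in>{1..n}. viol m g h \<delta> i x)"

definition nviol :: "nat \<Rightarrow> nat \<Rightarrow> (nat \<Rightarrow> 'a \<Rightarrow> real) \<Rightarrow> (nat \<Rightarrow> 'a \<Rightarrow> real) \<Rightarrow> real \<Rightarrow> 'a \<Rightarrow> nat" where
  "nviol m n g h \<delta> x = card {i \<in> {1..n}. viol m g h \<delta> i x > 0}"

definition theta :: "real \<Rightarrow> nat \<Rightarrow> nat \<Rightarrow> (nat \<Rightarrow> 'a \<Rightarrow> real) \<Rightarrow> (nat \<Rightarrow> 'a \<Rightarrow> real) \<Rightarrow> real \<Rightarrow> 'a \<Rightarrow> real" where
  "theta V m n g h \<delta> x = (if vtheta m n g h \<delta> x = 0 then - V else vtheta m n g h \<delta> x)"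

definition sigma :: "real \<Rightarrow> real \<Rightarrow> real \<Rightarrow> nat \<Rightarrow> nat \<Rightarrow> (nat \<Rightarrow> 'a \<Rightarrow> real) \<Rightarrow> (nat \<Rightarrow> 'a \<Rightarrow> real) \<Rightarrow> real \<Rightarrow> 'a \<Rightarrow> real" where
  "sigma D V \<xi> m n g h \<delta> x =
     (if nviol m n g h \<delta> x > 0 then 1 else 0) * D + D / (\<xi> * V) * theta V m n g h \<delta> x"

definition pif :: "('a \<Rightarrow> real) \<Rightarrow> real \<Rightarrow> real \<Rightarrow> real \<Rightarrow> nat \<Rightarrow> nat \<Rightarrow> (nat \<Rightarrow> 'a \<Rightarrow> real) \<Rightarrow> (nat \<Rightarrow> 'a \<Rightarrow> real) \<Rightarrow> real \<Rightarrow> 'a \<Rightarrow> real" where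
  "pif f D V \<xi> m n g h \<delta> x = - (f x + sigma D V \<xi> m n g h \<delta> x)"

text \<open>Rank function with thresholds q 1 < ... < q a < b; q_0 = 0, q_(a+1) = b.
  Only meaningful on [-b,b].\<close>
definition qext :: "(nat \<Rightarrow> real) \<Rightarrow> nat \<Rightarrow> real \<Rightarrow> nat \<Rightarrow> real" where
  "qext q a b j = (if j = 0 then 0 else if j = a + 1 then b else q j)"

definition rank :: "(nat \<Rightarrow> real) \<Rightarrow> nat \<Rightarrow> real \<Rightarrow> real \<Rightarrow> int" where
  "rank q a b \<Delta> =
     (if \<Delta> = 0 then 0
      else if \<Delta> > 0 then
        int (THE j. 1 \<le> j \<and> j \<le> a + 1 \<and> qext q a b (j - 1) < \<Delta> \<and> \<Delta> \<le> qext q a b j)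
      else
        - int (THE j. 1 \<le> j \<and> j \<le> a + 1 \<and> - qext q a b j \<le> \<Delta> \<and> \<Delta> < - qext q a b (j - 1)))"

end

theory Submission
  imports Defs
begin


lemma the_idx:
  fixes Q :: "nat \<Rightarrow> real"
  assumes strict: "\<And>i j. i < j \<Longrightarrow> j \<le> a+1 \<Longrightarrow> Q i < Q j"
    and lo: "Q 0 < t" and hi: "t \<le> Q (a+1)"
  shows "(THE j. 1 \<le> j \<and> j \<le> a+1 \<and> Q (j-1) < t \<and> t \<le> Q j) = card {i\<in>{0..a}. Q i < t}"
proof -
  have card: "card {i\<in>{0..a}. Q i < t} = j"
    if P: "1 \<le> j" "j \<le> a+1" "Q (j-1) < t" "t \<le> Q j" for j
  proof -
    have "{i\<in>{0..a}. Q i < t} = {0..<j}"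
    proof (auto)
      fix i assume "i \<le> a" "Q i < t"
      show "i < j"
      proof (rule ccontr)
        assume "\<not> i < j" then have "j \<le> i" by simp
        then have "Q j \<le> Q i" using strict[of j i] \<open>i\<le>a\<close> by (cases "j=i") auto
        then show False using P \<open>Q i < t\<close> by simp
      qed
    next
      fix i assume "i < j" then show "i \<le> a" using P by simp
    next
      fix i assume "i < j"
      show "Q i < t"
      proof (cases "i = j - 1")
        case True then show ?thesis using P by simp
      next
        case False
        then have "i < j - 1" using \<open>i<j\<close> by simp
        then have "Q i < Q (j-1)" using strict[of i "j-1"] P by simp
        then show ?thesis using P by simp
      qed
    qed
    thus ?thesis by simp
  qed
  define j0 where "j0 = (LEAST j. 1 \<le> j \<and> t \<le> Q j)"
  have ex: "1 \<le> a+1 \<and> t \<le> Q(a+1)" using hi by simp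
  have j0: "1 \<le> j0 \<and> t \<le> Q j0" unfolding j0_def by (rule LeastI[of "\<lambda>j. 1 \<le> j \<and> t \<le> Q j", OF ex])
  have j0le: "j0 \<le> a+1" unfolding j0_def by (rule Least_le[of "\<lambda>j. 1 \<le> j \<and> t \<le> Q j", OF ex])
  have j0lt: "Q (j0-1) < t"
  proof (cases "j0 = 1")
    case True then show ?thesis using lo by simp
  next
    case False
    then have "j0 - 1 < j0" "1 \<le> j0 - 1" using j0 by auto
    then have "\<not> (1 \<le> j0 - 1 \<and> t \<le> Q (j0-1))" unfolding j0_def using not_less_Least by blast
    then show ?thesis using \<open>1 \<le> j0 - 1\<close> by simp
  qed
  have "(THE j. 1 \<le> j \<and> j \<le> a+1 \<and> Q (j-1) < t \<and> t \<le> Q j) = j0"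
    apply (rule the_equality)
    using j0 j0le j0lt apply simp
  proof -
    fix j assume "1 \<le> j \<and> j \<le> a+1 \<and> Q (j-1) < t \<and> t \<le> Q j"
    then have "card {i\<in>{0..a}. Q i < t} = j" using card by blast
    moreover have "card {i\<in>{0..a}. Q i < t} = j0" using card j0 j0le j0lt by blast
    ultimately show "j = j0" by simp
  qed
  moreover have c0: "card {i\<in>{0..a}. Q i < t} = j0" using card j0 j0le j0lt by blast
  ultimately show ?thesis by (rule trans[OF _ sym])
qed


definition R where "R q a b t = (THE j. 1 \<le> j \<and> j \<le> a+1 \<and> qext q a b (j-1) < t \<and> t \<le> qext q a b j)"

lemma rank_alt: "rank q a b \<Delta> = (if \<Delta> = 0 then 0 else if \<Delta> > 0 then int (R q a b \<Delta>) else - int (R q a b (-\<Delta>)))"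
proof -
  have e2: "(\<lambda>j. 1 \<le> j \<and> j \<le> a + 1 \<and> - qext q a b j \<le> \<Delta> \<and> \<Delta> < - qext q a b (j - 1))
     = (\<lambda>j. 1 \<le> j \<and> j \<le> a + 1 \<and> qext q a b (j - 1) < - \<Delta> \<and> - \<Delta> \<le> qext q a b j)"
    by (rule ext) linarith
  show ?thesis unfolding rank_def R_def e2 by (rule refl)
qed

lemma rank_neg: "rank q a b (-\<Delta>) = - rank q a b \<Delta>"
  unfolding rank_alt by simp

definition strictq where
  "strictq q a b = (\<forall>i j. i < j \<longrightarrow> j \<le> a+1 \<longrightarrow> qext q a b i < qext q a b j)"

definition NN where "NN q a b t = card {i\<in>{0..a}. qext q a b i < t}"

lemma R_card:
  assumes "strictq q a b" "0 < t" "t \<le> b"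
  shows "R q a b t = NN q a b t"
  unfolding R_def NN_def
  apply (rule the_idx)
  using assms(1) apply (unfold strictq_def, blast)
  using assms(2,3) by (simp_all add: qext_def)

lemma NN_bounds:
  assumes "0 < t"
  shows "1 \<le> NN q a b t" "NN q a b t \<le> a + 1"
proof -
  have "NN q a b t \<le> card {0..a}" unfolding NN_def by (rule card_mono) auto
  then show "NN q a b t \<le> a + 1" by simp
  have "0 \<in> {i\<in>{0..a}. qext q a b i < t}" using assms by (simp add: qext_def)
  moreover have "finite {i\<in>{0..a}. qext q a b i < t}" by simp
  ultimately have "{i\<in>{0..a}. qext q a b i < t} \<noteq> {}" "finite {i\<in>{0..a}. qext q a b i < t}" by auto
  then have "card {i\<in>{0..a}. qext q a b i < t} > 0" by (simp add: card_gt_0_iff)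
  then show "1 \<le> NN q a b t" unfolding NN_def by simp
qed

lemma NN_mono: "t1 \<le> t2 \<Longrightarrow> NN q a b t1 \<le> NN q a b t2"
  unfolding NN_def by (rule card_mono) auto

lemma rank_eq:
  assumes "strictq q a b" "\<bar>d\<bar> \<le> b"
  shows "rank q a b d = (if d = 0 then 0 else if d > 0 then int (NN q a b d) else - int (NN q a b (-d)))"
  using R_card[OF assms(1), of d] R_card[OF assms(1), of "-d"] assms(2)
  unfolding rank_alt by auto

lemma rank_mono:
  assumes "strictq q a b" "\<bar>d1\<bar> \<le> b" "\<bar>d2\<bar> \<le> b" "d1 \<le> d2"
  shows "rank q a b d1 \<le> rank q a b d2"
  unfolding rank_eq[OF assms(1,2)] rank_eq[OF assms(1,3)]
  using NN_mono[of d1 d2 q a b] NN_mono[of "-d2" "-d1" q a b] assms(4)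
    NN_bounds[of d1 q a b] NN_bounds[of d2 q a b] NN_bounds[of "-d1" q a b] NN_bounds[of "-d2" q a b]
  by auto

lemma rank_bounds:
  assumes "strictq q a b" "\<bar>d\<bar> \<le> b"
  shows "rank q a b d \<le> int a + 1" "- int a - 1 \<le> rank q a b d"
  unfolding rank_eq[OF assms]
  using NN_bounds[of d q a b] NN_bounds[of "-d" q a b] by auto

lemma rank_sign:
  assumes "strictq q a b" "\<bar>d\<bar> \<le> b"
  shows "0 < d \<Longrightarrow> 0 < rank q a b d" "d < 0 \<Longrightarrow> rank q a b d < 0" "d = 0 \<Longrightarrow> rank q a b d = 0"
  unfolding rank_eq[OF assms]
  using NN_bounds[of d q a b] NN_bounds[of "-d" q a b] by auto


lemma eta_lt_gen:
  fixes \<eta> :: "nat \<Rightarrow> real"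
  assumes eta_mono: "\<forall>j\<in>{1..<\<alpha>}. \<eta> j < \<eta> (j + 1)"
  shows "1 \<le> i \<Longrightarrow> i < j \<Longrightarrow> j \<le> \<alpha> \<Longrightarrow> \<eta> i < \<eta> j"
proof (induction j)
  case 0 then show ?case by simp
next
  case (Suc j)
  have step: "\<eta> j < \<eta> (Suc j)" using eta_mono Suc.prems by auto
  show ?case
  proof (cases "i = j")
    case True then show ?thesis using step by simp
  next
    case False
    then have "\<eta> i < \<eta> j" using Suc by auto
    then show ?thesis using step by simp
  qed
qed

lemma vtheta_nonneg: "0 \<le> vtheta m n g h \<delta> x"
  unfolding vtheta_def viol_def by (rule sum_nonneg) auto

lemma nviol_pos: "(nviol m n g h \<delta> x > 0) = (vtheta m n g h \<delta> x \<noteq> 0)"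
proof -
  have nn: "\<forall>i\<in>{1..n}. 0 \<le> viol m g h \<delta> i x" unfolding viol_def by auto
  have "(vtheta m n g h \<delta> x = 0) = (\<forall>i\<in>{1..n}. viol m g h \<delta> i x = 0)"
    unfolding vtheta_def using sum_nonneg_eq_0_iff[of "{1..n}" "\<lambda>i. viol m g h \<delta> i x"] nn by simp
  moreover have "(nviol m n g h \<delta> x > 0) = ({i \<in> {1..n}. viol m g h \<delta> i x > 0} \<noteq> {})"
    unfolding nviol_def by (simp add: card_gt_0_iff)
  ultimately show ?thesis using nn by force
qed



theorem lemma10:
  fixes S :: "(real^'k) set" and lo hi :: "real^'k"
    and f :: "real^'k \<Rightarrow> real" and g h :: "nat \<Rightarrow> real^'k \<Rightarrow> real"
    and m n :: nat and \<delta> \<xi> D V :: real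
    and \<alpha> :: nat and \<eta> :: "nat \<Rightarrow> real"
    and x1 x2 :: "real^'k"
  assumes S_box: "S = cbox lo hi"
    and m_le_n: "m \<le> n"
    and f_cont: "continuous_on S f"
    and g_cont: "\<forall>i\<in>{1..m}. continuous_on S (g i)"
    and h_cont: "\<forall>i\<in>{m+1..n}. continuous_on S (h i)"
    and delta_pos: "\<delta> > 0"
    and D_def: "D = (SUP x\<in>S. f x) - (INF x\<in>S. f x)"
    and V_def: "V = (SUP x\<in>S. vtheta m n g h \<delta> x)"
    and D_pos: "D > 0" and V_pos: "V > 0"
    and xi: "0 < \<xi>" "\<xi> \<le> 1"
    and alpha: "\<alpha> \<ge> 1"
    and eta_pos: "0 < \<eta> 1"
    and eta_mono: "\<forall>j\<in>{1..<\<alpha>}. \<eta> j < \<eta> (j + 1)"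
    and eta_lt1: "\<eta> \<alpha> < 1"
    and x1: "x1 \<in> S" and x2: "x2 \<in> S"
  defines "y \<equiv> f x1 - f x2"
    and "z \<equiv> theta V m n g h \<delta> x1 - theta V m n g h \<delta> x2"
    and "pv \<equiv> pif f D V \<xi> m n g h \<delta>"
  shows "let \<phi> = rank (\<lambda>j. \<eta> j * D) \<alpha> D y
               + rank (\<lambda>j. if j \<le> \<alpha> then \<eta> j * \<xi> * V else \<xi> * V) (\<alpha> + 1) (2 * V) z;
             e = \<xi> * V / D in
         (\<phi> < 0 \<longrightarrow> pv x1 > pv x2)
       \<and> (\<phi> > 0 \<longrightarrow> pv x1 < pv x2)
       \<and> (\<phi> = 0 \<and> z = - e * y \<longrightarrow> pv x1 = pv x2)
       \<and> (\<phi> = 0 \<and> z < - e * y \<longrightarrow> pv x1 > pv x2)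
       \<and> (\<phi> = 0 \<and> z > - e * y \<longrightarrow> pv x1 < pv x2)"
proof -
  define th where "th = theta V m n g h \<delta>"
  define vt where "vt = vtheta m n g h \<delta>"
  define I where "I x = (if nviol m n g h \<delta> x > 0 then 1 else (0::real))" for x
  define e where "e = \<xi> * V / D"
  define qy where "qy = (\<lambda>j. \<eta> j * D)"
  define qz where "qz = (\<lambda>j. if j \<le> \<alpha> then \<eta> j * \<xi> * V else \<xi> * V)"
  define ry where "ry = rank qy \<alpha> D"
  define rz where "rz = rank qz (\<alpha> + 1) (2 * V)"
  have xiV: "0 < \<xi> * V" "\<xi> * V \<le> V" using xi V_pos by auto
  have xiV2: "\<xi> * V < 2 * V" using xiV V_pos by linarith
  have e_pos: "e > 0" unfolding e_def using xiV D_pos by simp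
  have eD: "e * D = \<xi> * V" unfolding e_def using D_pos by simp
  have eta_lt: "\<eta> i < \<eta> j" if "1 \<le> i" "i < j" "j \<le> \<alpha>" for i j
    using eta_lt_gen[OF eta_mono] that by blast
  have eta_pos': "0 < \<eta> j" if "1 \<le> j" "j \<le> \<alpha>" for j
    using eta_lt[of 1 j] eta_pos that by (cases "j = 1") auto
  have eta_lt1': "\<eta> j < 1" if "1 \<le> j" "j \<le> \<alpha>" for j
    using eta_lt[of j \<alpha>] eta_lt1 that by (cases "j = \<alpha>") auto
  have hz: "0 < \<eta> j * \<xi> * V \<and> \<eta> j * \<xi> * V < \<xi> * V" if "1 \<le> j" "j \<le> \<alpha>" for j
  proof -
    have "\<eta> j * (\<xi>*V) < 1 * (\<xi>*V)" using mult_strict_right_mono[OF eta_lt1'[OF that] xiV(1)] .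
    moreover have "0 < \<eta> j * (\<xi>*V)" using eta_pos'[OF that] xiV(1) by simp
    ultimately show ?thesis by (simp add: mult.assoc)
  qed
  have hz2: "\<eta> i * \<xi> * V < \<eta> j * \<xi> * V" if "1 \<le> i" "i < j" "j \<le> \<alpha>" for i j
    using mult_strict_right_mono[OF eta_lt[OF that] xiV(1)] by (simp add: mult.assoc)
  have hy: "0 < \<eta> j * D \<and> \<eta> j * D < D" if "1 \<le> j" "j \<le> \<alpha>" for j
  proof -
    have "\<eta> j * D < 1 * D" using mult_strict_right_mono[OF eta_lt1'[OF that] D_pos] .
    moreover have "0 < \<eta> j * D" using eta_pos'[OF that] D_pos by simp
    ultimately show ?thesis by simp
  qed
  have hy2: "\<eta> i * D < \<eta> j * D" if "1 \<le> i" "i < j" "j \<le> \<alpha>" for i j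
    using mult_strict_right_mono[OF eta_lt[OF that] D_pos] .
  have hzy: "\<eta> i * \<xi> * V = e * (\<eta> i * D)" for i
  proof -
    have "e * (\<eta> i * D) = \<eta> i * (e * D)" by (simp add: ac_simps)
    then show ?thesis using eD by (simp add: mult.assoc)
  qed
  have compS: "compact S" using S_box by simp
  have vc: "continuous_on S (\<lambda>x. viol m g h \<delta> i x)" if "i \<in> {1..n}" for i
  proof (cases "i \<le> m")
    case True
    then have "(\<lambda>x. viol m g h \<delta> i x) = (\<lambda>x. max (g i x) 0)" by (simp add: viol_def fun_eq_iff)
    moreover have "continuous_on S (g i)" using g_cont that True by auto
    ultimately show ?thesis by (auto intro!: continuous_intros)
  next
    case False
    then have "(\<lambda>x. viol m g h \<delta> i x) = (\<lambda>x. max (\<bar>h i x\<bar> - \<delta>) 0)" by (simp add: viol_def fun_eq_iff)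
    moreover have "continuous_on S (h i)" using h_cont that False by auto
    ultimately show ?thesis by (auto intro!: continuous_intros)
  qed
  have vtc: "continuous_on S vt"
  proof -
    have "continuous_on S (\<lambda>x. \<Sum>i\<in>{1..n}. viol m g h \<delta> i x)"
      by (rule continuous_on_sum) (use vc in auto)
    then show ?thesis unfolding vt_def vtheta_def[abs_def] .
  qed
  have bvt: "bdd_above (vt ` S)"
    by (rule bounded_imp_bdd_above[OF compact_imp_bounded[OF compact_continuous_image[OF vtc compS]]])
  have bf: "bounded (f ` S)"
    by (rule compact_imp_bounded[OF compact_continuous_image[OF f_cont compS]])
  have vt_le: "vt x \<le> V" if "x \<in> S" for x
    unfolding V_def vt_def[symmetric] using cSUP_upper[OF that bvt] .
  have vt_nn: "0 \<le> vt x" for x unfolding vt_def by (rule vtheta_nonneg)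
  have fsup: "f x \<le> (SUP x\<in>S. f x)" if "x \<in> S" for x
    using cSUP_upper[OF that bounded_imp_bdd_above[OF bf]] .
  have finf: "(INF x\<in>S. f x) \<le> f x" if "x \<in> S" for x
    using cINF_lower[OF bounded_imp_bdd_below[OF bf] that] .
  have ybd: "\<bar>y\<bar> \<le> D" unfolding y_def D_def
    using fsup[OF x1] fsup[OF x2] finf[OF x1] finf[OF x2] by linarith
  have eybd: "\<bar>e * y\<bar> \<le> \<xi> * V"
  proof -
    have "\<bar>e * y\<bar> = e * \<bar>y\<bar>" using e_pos by (simp add: abs_mult)
    also have "\<dots> \<le> e * D" using ybd e_pos by (simp add: mult_left_mono)
    finally show ?thesis using eD by simp
  qed
  have pvx: "pv x = - (f x + I x * D + D / (\<xi> * V) * th x)" for x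
    unfolding pv_def pif_def sigma_def I_def th_def by simp
  have diff: "pv x1 - pv x2 = - ((D / (\<xi> * V)) * (e * y + \<xi> * V * (I x1 - I x2) + z))"
    unfolding pvx y_def z_def th_def[symmetric] e_def using xi V_pos D_pos
    by (simp add: field_simps)
  have cpos: "D / (\<xi> * V) > 0" using D_pos xiV by simp
  have pv_gt: "pv x1 > pv x2" if "e * y + \<xi> * V * (I x1 - I x2) + z < 0"
  proof -
    have "(D / (\<xi> * V)) * (e * y + \<xi> * V * (I x1 - I x2) + z) < 0"
      by (rule mult_pos_neg[OF cpos that])
    then show ?thesis using diff by linarith
  qed
  have pv_lt: "pv x1 < pv x2" if "e * y + \<xi> * V * (I x1 - I x2) + z > 0"
  proof -
    have "(D / (\<xi> * V)) * (e * y + \<xi> * V * (I x1 - I x2) + z) > 0"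
      by (rule mult_pos_pos[OF cpos that])
    then show ?thesis using diff by linarith
  qed
  have pv_eq: "pv x1 = pv x2" if "e * y + \<xi> * V * (I x1 - I x2) + z = 0"
    using diff that by simp
  have sy: "strictq qy \<alpha> D"
    unfolding strictq_def
  proof (intro allI impI)
    fix i j :: nat assume ij: "i < j" "j \<le> \<alpha> + 1"
    show "qext qy \<alpha> D i < qext qy \<alpha> D j"
    proof (cases "j = \<alpha> + 1")
      case True
      then show ?thesis using ij hy[of i] D_pos
        by (auto simp: qext_def qy_def)
    next
      case False
      then have "j \<le> \<alpha>" "1 \<le> j" using ij by auto
      then show ?thesis using ij False hy2[of i j] hy[of j] D_pos
        by (auto simp: qext_def qy_def)
    qed
  qed
  have sz: "strictq qz (\<alpha> + 1) (2 * V)"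
    unfolding strictq_def
  proof (intro allI impI)
    fix i j :: nat assume ij: "i < j" "j \<le> \<alpha> + 1 + 1"
    have qle: "qext qz (\<alpha> + 1) (2 * V) i \<le> \<xi> * V" if "i \<le> \<alpha> + 1" for i
      using that hz[of i] xiV
      by (auto simp: qext_def qz_def)
    show "qext qz (\<alpha> + 1) (2 * V) i < qext qz (\<alpha> + 1) (2 * V) j"
    proof (cases "j = \<alpha> + 2")
      case True
      then have "qext qz (\<alpha> + 1) (2 * V) j = 2 * V" by (simp add: qext_def)
      moreover have "qext qz (\<alpha> + 1) (2 * V) i \<le> \<xi> * V" using qle ij True by simp
      ultimately show ?thesis using xiV2 by linarith
    next
      case False
      show ?thesis
      proof (cases "j = \<alpha> + 1")
        case True
        then have "qext qz (\<alpha> + 1) (2 * V) j = \<xi> * V" by (simp add: qext_def qz_def)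
        moreover have "qext qz (\<alpha> + 1) (2 * V) i < \<xi> * V"
          using ij True hz[of i] xiV by (auto simp: qext_def qz_def)
        ultimately show ?thesis by simp
      next
        case False2: False
        then have "j \<le> \<alpha>" "1 \<le> j" using ij False by auto
        then show ?thesis using ij hz2[of i j] hz[of j] xiV
          by (auto simp: qext_def qz_def)
      qed
    qed
  qed
  have NNrel: "NN qy \<alpha> D t = NN qz (\<alpha> + 1) (2 * V) (e * t)" if "0 < t" "t \<le> D" for t
  proof -
    have "{i\<in>{0..\<alpha>}. qext qy \<alpha> D i < t} = {i\<in>{0..\<alpha>+1}. qext qz (\<alpha> + 1) (2 * V) i < e * t}"
    proof (rule set_eqI)
      fix i
      have et: "e * t \<le> \<xi> * V" using eD that e_pos by (metis mult_left_mono less_imp_le)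
      show "i \<in> {i\<in>{0..\<alpha>}. qext qy \<alpha> D i < t} \<longleftrightarrow> i \<in> {i\<in>{0..\<alpha>+1}. qext qz (\<alpha> + 1) (2 * V) i < e * t}"
      proof (cases "i \<le> \<alpha>")
        case True
        have "qext qz (\<alpha> + 1) (2 * V) i = e * qext qy \<alpha> D i"
          using True hzy by (auto simp: qext_def qz_def qy_def)
        then show ?thesis using True e_pos by simp
      next
        case False
        then show ?thesis
        proof (cases "i = \<alpha> + 1")
          case True
          then have "qext qz (\<alpha> + 1) (2 * V) i = \<xi> * V" by (simp add: qext_def qz_def)
          then show ?thesis using True et by auto
        qed auto
      qed
    qed
    then show ?thesis unfolding NN_def by simp
  qed
  have ryrz: "ry y = rz (e * y)"
  proof -
    have a1: "\<bar>e * y\<bar> \<le> 2 * V" using eybd xiV by linarith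
    consider "y = 0" | "y > 0" | "y < 0" by linarith
    then show ?thesis
    proof cases
      case 1 then show ?thesis unfolding ry_def rz_def by (simp add: rank_def)
    next
      case 2
      then have "e * y > 0" using e_pos by simp
      then show ?thesis unfolding ry_def rz_def rank_eq[OF sy ybd] rank_eq[OF sz a1]
        using 2 NNrel[of y] ybd e_pos by simp
    next
      case 3
      then have "e * y < 0" using e_pos by (simp add: mult_pos_neg)
      then show ?thesis unfolding ry_def rz_def rank_eq[OF sy ybd] rank_eq[OF sz a1]
        using 3 NNrel[of "-y"] ybd e_pos by simp
    qed
  qed
  have th_feas: "th x = - V" if "vt x = 0" for x using that unfolding th_def theta_def vt_def by simp
  have th_inf: "th x = vt x" if "vt x \<noteq> 0" for x using that unfolding th_def theta_def vt_def by simp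
  have I0: "I x = 0" if "vt x = 0" for x using that nviol_pos[of m n g h \<delta> x] unfolding I_def vt_def by simp
  have I1: "I x = 1" if "vt x \<noteq> 0" for x using that nviol_pos[of m n g h \<delta> x] unfolding I_def vt_def by simp
  define \<phi> where "\<phi> = ry y + rz z"
  have same: "(\<phi> < 0 \<longrightarrow> pv x1 > pv x2) \<and> (\<phi> > 0 \<longrightarrow> pv x1 < pv x2)"
    if Ieq: "I x1 = I x2" and zb: "\<bar>z\<bar> \<le> 2 * V"
  proof -
    have a1: "\<bar>- (e * y)\<bar> \<le> 2 * V" using eybd xiV by linarith
    have phi: "\<phi> = rz z - rz (- (e * y))" unfolding \<phi>_def ryrz rz_def rank_neg by simp
    have A: "\<phi> < 0 \<longrightarrow> pv x1 > pv x2"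
    proof
      assume "\<phi> < 0"
      then have "rz z < rz (- (e * y))" using phi by simp
      then have "z < - (e * y)" using rank_mono[OF sz a1 zb] unfolding rz_def by force
      then show "pv x1 > pv x2" using pv_gt Ieq by simp
    qed
    have B: "\<phi> > 0 \<longrightarrow> pv x1 < pv x2"
    proof
      assume "\<phi> > 0"
      then have "rz (- (e * y)) < rz z" using phi by simp
      then have "- (e * y) < z" using rank_mono[OF sz zb a1] unfolding rz_def by force
      then show "pv x1 < pv x2" using pv_lt Ieq by simp
    qed
    show ?thesis using A B by blast
  qed
  have sameI: "(\<phi> = 0 \<and> z = - e * y \<longrightarrow> pv x1 = pv x2)
       \<and> (\<phi> = 0 \<and> z < - e * y \<longrightarrow> pv x1 > pv x2)
       \<and> (\<phi> = 0 \<and> z > - e * y \<longrightarrow> pv x1 < pv x2)" if Ieq: "I x1 = I x2"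
    using pv_eq pv_gt pv_lt Ieq by auto
  have NNz_top: "NN qz (\<alpha> + 1) (2 * V) t = \<alpha> + 2" if "\<xi> * V < t" for t
  proof -
    have "{i\<in>{0..\<alpha>+1}. qext qz (\<alpha> + 1) (2 * V) i < t} = {0..\<alpha>+1}"
    proof (rule set_eqI)
      fix i
      have "qext qz (\<alpha> + 1) (2 * V) i \<le> \<xi> * V" if "i \<le> \<alpha> + 1"
        using that hz[of i] xiV
        by (auto simp: qext_def qz_def)
      then show "i \<in> {i\<in>{0..\<alpha>+1}. qext qz (\<alpha> + 1) (2 * V) i < t} \<longleftrightarrow> i \<in> {0..\<alpha>+1}"
        using \<open>\<xi> * V < t\<close> by force
    qed
    then show ?thesis unfolding NN_def by simp
  qed
  have main: "(\<phi> < 0 \<longrightarrow> pv x1 > pv x2)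
       \<and> (\<phi> > 0 \<longrightarrow> pv x1 < pv x2)
       \<and> (\<phi> = 0 \<and> z = - e * y \<longrightarrow> pv x1 = pv x2)
       \<and> (\<phi> = 0 \<and> z < - e * y \<longrightarrow> pv x1 > pv x2)
       \<and> (\<phi> = 0 \<and> z > - e * y \<longrightarrow> pv x1 < pv x2)"
  proof (cases "vt x1 = 0"; cases "vt x2 = 0")
    assume h1: "vt x1 = 0" and h2: "vt x2 = 0"
    have "z = 0" unfolding z_def th_def[symmetric] using th_feas h1 h2 by simp
    then show ?thesis using same sameI I0 h1 h2 V_pos by simp
  next
    assume h1: "vt x1 \<noteq> 0" and h2: "vt x2 \<noteq> 0"
    have "z = vt x1 - vt x2" unfolding z_def th_def[symmetric] using th_inf h1 h2 by simp
    then have "\<bar>z\<bar> \<le> 2 * V" using vt_le[OF x1] vt_le[OF x2] vt_nn[of x1] vt_nn[of x2] by linarith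
    then show ?thesis using same sameI I1 h1 h2 by simp
  next
    assume h1: "vt x1 = 0" and h2: "vt x2 \<noteq> 0"
    have zz: "z = - V - vt x2" unfolding z_def th_def[symmetric] using th_feas th_inf h1 h2 by simp
    have vp: "0 < vt x2" using h2 vt_nn[of x2] by linarith
    have zb: "\<bar>z\<bar> \<le> 2 * V" "z < 0" using zz vp vt_le[OF x2] V_pos by auto
    have "rz z = - int (\<alpha> + 2)"
      unfolding rz_def rank_eq[OF sz zb(1)] using zb(2) NNz_top[of "-z"] zz vp xiV by simp
    moreover have "ry y \<le> int \<alpha> + 1" unfolding ry_def using rank_bounds[OF sy ybd] by simp
    ultimately have "\<phi> < 0" unfolding \<phi>_def by simp
    moreover have "pv x1 > pv x2"
      using pv_gt I0[OF h1] I1[OF h2] zz eybd vp xiV by auto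
    ultimately show ?thesis by simp
  next
    assume h1: "vt x1 \<noteq> 0" and h2: "vt x2 = 0"
    have zz: "z = vt x1 + V" unfolding z_def th_def[symmetric] using th_feas th_inf h1 h2 by simp
    have vp: "0 < vt x1" using h1 vt_nn[of x1] by linarith
    have zb: "\<bar>z\<bar> \<le> 2 * V" "z > 0" using zz vp vt_le[OF x1] V_pos by auto
    have "rz z = int (\<alpha> + 2)"
      unfolding rz_def rank_eq[OF sz zb(1)] using zb(2) NNz_top[of "z"] zz vp xiV by simp
    moreover have "ry y \<ge> - int \<alpha> - 1" unfolding ry_def using rank_bounds[OF sy ybd] by simp
    ultimately have "\<phi> > 0" unfolding \<phi>_def by simp
    moreover have "pv x1 < pv x2"
      using pv_lt I1[OF h1] I0[OF h2] zz eybd vp xiV by auto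
    ultimately show ?thesis by simp
  qed
  show ?thesis
    using main unfolding Let_def \<phi>_def ry_def rz_def qy_def qz_def e_def .
qed


end
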